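(* Let $\mathbb{F}$ be a field with $\mathrm{char}(\mathbb{F})\neq 2$ and let $L$ be a finite-dimensional Lie algebra over $\mathbb{F}$ of breadth $1$. Then $L$ is nilpotent if and only if $[L,L]\subseteq Z(L)$.
   Context: For $x\in L$, $b(x)=\mathrm{rank}(\mathrm{ad}_x)$ and the breadth of $L$ is $b(L)=\max\{b(x)\mid x\in L\}$. $Z(L)$ denotes the center of $L$. *)

theory Defs
  imports Main "HOL.Vector_Spaces"
begin

definition lie_algebra :: "('a::field \<Rightarrow> 'b::ab_group_add \<Rightarrow> 'b) \<Rightarrow> ('b \<Rightarrow> 'b \<Rightarrow> 'b) \<Rightarrow> bool" where
  "lie_algebra scale br \<longleftrightarrow>
     Vector_Spaces.vector_space scale \<and>
     (\<forall>x. Vector_Spaces.linear scale scale (br x)) \<and>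
     (\<forall>y. Vector_Spaces.linear scale scale (\<lambda>x. br x y)) \<and>
     (\<forall>x. br x x = 0) \<and>
     (\<forall>x y z. br x (br y z) + br y (br z x) + br z (br x y) = 0)"

definition fin_dim_space :: "('a::field \<Rightarrow> 'b::ab_group_add \<Rightarrow> 'b) \<Rightarrow> bool" where
  "fin_dim_space scale \<longleftrightarrow> (\<exists>B. finite B \<and> module.span scale B = UNIV)"

definition breadth_elt :: "('a::field \<Rightarrow> 'b::ab_group_add \<Rightarrow> 'b) \<Rightarrow> ('b \<Rightarrow> 'b \<Rightarrow> 'b) \<Rightarrow> 'b \<Rightarrow> nat" where
  "breadth_elt scale br x = Vector_Spaces.vector_space.dim scale (range (br x))"

definition breadth :: "('a::field \<Rightarrow> 'b::ab_group_add \<Rightarrow> 'b) \<Rightarrow> ('b \<Rightarrow> 'b \<Rightarrow> 'b) \<Rightarrow> nat" where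
  "breadth scale br = Max (range (breadth_elt scale br))"

definition derived_alg :: "('a::field \<Rightarrow> 'b::ab_group_add \<Rightarrow> 'b) \<Rightarrow> ('b \<Rightarrow> 'b \<Rightarrow> 'b) \<Rightarrow> 'b set" where
  "derived_alg scale br = module.span scale {br x y | x y. True}"

definition lie_center :: "('b \<Rightarrow> 'b \<Rightarrow> 'b::ab_group_add) \<Rightarrow> 'b set" where
  "lie_center br = {z. \<forall>x. br x z = 0}"

fun lower_central :: "('a::field \<Rightarrow> 'b::ab_group_add \<Rightarrow> 'b) \<Rightarrow> ('b \<Rightarrow> 'b \<Rightarrow> 'b) \<Rightarrow> nat \<Rightarrow> 'b set" where
  "lower_central scale br 0 = UNIV"
| "lower_central scale br (Suc k) = module.span scale {br x y | x y. y \<in> lower_central scale br k}"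

definition lie_nilpotent :: "('a::field \<Rightarrow> 'b::ab_group_add \<Rightarrow> 'b) \<Rightarrow> ('b \<Rightarrow> 'b \<Rightarrow> 'b) \<Rightarrow> bool" where
  "lie_nilpotent scale br \<longleftrightarrow> (\<exists>k. lower_central scale br k = {0})"

end

theory Submission
  imports Defs
begin

lemma vs_dim_ge2:
  assumes vs: "Vector_Spaces.vector_space scale"
    and fW: "finite W" and VW: "V \<subseteq> module.span scale W"
    and wV: "w \<in> V" and uV: "u \<in> V" and w0: "w \<noteq> 0"
    and us: "u \<notin> module.span scale {w}"
  shows "2 \<le> Vector_Spaces.vector_space.dim scale V"
proof -
  interpret V: vector_space scale by (rule vs)
  obtain B where B: "B \<subseteq> V" "V.independent B" "V \<subseteq> V.span B" "card B = V.dim V"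
    using V.basis_exists by blast
  have "finite B" using V.independent_span_bound[OF fW B(2)] B(1) VW by auto
  have "V.independent {w}" using w0 by (simp add: V.independent_insert)
  hence ind: "V.independent {u, w}" using us by (simp add: V.independent_insert)
  have "u \<noteq> w" using us V.span_base by blast
  have "card {u, w} \<le> card B"
    using V.independent_span_bound[OF \<open>finite B\<close> ind] B(3) wV uV by auto
  thus ?thesis using \<open>u \<noteq> w\<close> B(4) by simp
qed

theorem proposition2p3:
  fixes scale :: "'a::field \<Rightarrow> 'b::ab_group_add \<Rightarrow> 'b"
    and br :: "'b \<Rightarrow> 'b \<Rightarrow> 'b"
  assumes "(2::'a) \<noteq> 0"
    and "lie_algebra scale br"
    and "fin_dim_space scale"
    and "breadth scale br = 1"
  shows "lie_nilpotent scale br \<longleftrightarrow> derived_alg scale br \<subseteq> lie_center br"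
proof -
  have vs: "Vector_Spaces.vector_space scale" and lin1: "\<And>x. Vector_Spaces.linear scale scale (br x)"
    and lin2: "\<And>y. Vector_Spaces.linear scale scale (\<lambda>x. br x y)"
    and alt: "\<And>x. br x x = 0"
    and jac: "\<And>x y z. br x (br y z) + br y (br z x) + br z (br x y) = 0"
    using assms(2) unfolding lie_algebra_def by auto
  interpret V: vector_space scale by (rule vs)
  have add2: "\<And>a b c. br a (b + c) = br a b + br a c" using lin1 by (simp add: linear_iff)
  have sc2: "\<And>a c b. br a (scale c b) = scale c (br a b)" using lin1 by (simp add: linear_iff)
  have add1: "\<And>a b c. br (a + b) c = br a c + br b c" using lin2 by (simp add: linear_iff)
  have zero2: "\<And>a. br a 0 = 0" using add2[of _ 0 0] by simp
  have zero1: "\<And>a. br 0 a = 0" using add1[of 0 0] by simp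
  have neg2: "\<And>a b. br a (- b) = - br a b"
    using add2 zero2 by (metis add.right_inverse add_eq_0_iff)
  have anti: "\<And>a b. br a b = - br b a"
  proof -
    fix a b
    have "br (a + b) (a + b) = 0" by (rule alt)
    moreover have "br (a + b) (a + b) = br a a + br a b + (br b a + br b b)"
      by (simp add: add1 add2)
    ultimately have "br a b + br b a = 0" by (simp add: alt)
    thus "br a b = - br b a" by (simp add: eq_neg_iff_add_eq_0)
  qed
  have center_sub: "V.subspace (lie_center br)"
    unfolding V.subspace_def lie_center_def by (simp add: zero2 add2 sc2)
  show ?thesis
  proof
    assume "derived_alg scale br \<subseteq> lie_center br"
    hence "lower_central scale br 1 \<subseteq> lie_center br"
      by (simp add: derived_alg_def)
    hence "{br x y | x y. y \<in> lower_central scale br 1} \<subseteq> {0}"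
      by (auto simp: lie_center_def)
    hence "lower_central scale br 2 \<subseteq> {0}"
      using V.span_minimal[of _ "{0}"] V.subspace_0 by (simp add: numeral_2_eq_2)
    hence "lower_central scale br 2 = {0}"
      using V.span_zero by (auto simp: numeral_2_eq_2)
    thus "lie_nilpotent scale br" unfolding lie_nilpotent_def by blast
  next
    assume "lie_nilpotent scale br"
    then obtain k where k: "lower_central scale br k = {0}" unfolding lie_nilpotent_def by blast
    have iter: "(br z ^^ n) v \<in> lower_central scale br n" for z v n
    proof (induction n)
      case 0 then show ?case by simp
    next
      case (Suc n) then show ?case by (auto intro!: V.span_base)
    qed
    have iter_eig: "(br z ^^ n) w = scale (m ^ n) w" if "br z w = scale m w" for z w m n
      using that by (induction n) (auto simp: sc2)
    have nil: "br z w = 0" if "br z w = scale m w" "w \<noteq> 0" for z w m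
    proof -
      have "scale (m ^ k) w = 0" using iter[where z=z and n=k and v=w] iter_eig[OF that(1)] k by simp
      hence "m ^ k = 0" using that(2) by simp
      hence "m = 0" by simp
      thus ?thesis using that(1) by simp
    qed
    obtain W where W: "finite W" "V.span W = UNIV" using assms(3) unfolding fin_dim_space_def by blast
    have bd: "breadth_elt scale br x \<le> card W" for x
      unfolding breadth_elt_def using V.dim_le_card[of "range (br x)" W] W by auto
    have fin: "finite (range (breadth_elt scale br))"
      using bd by (auto intro: finite_subset[of _ "{..card W}"])
    have le1: "V.dim (range (br x)) \<le> 1" for x
      using Max_ge[OF fin, of "breadth_elt scale br x"] assms(4)
      unfolding breadth_def breadth_elt_def by auto
    have inspan: "u \<in> V.span {w}" if "w \<in> range (br x)" "u \<in> range (br x)" "w \<noteq> 0" for x w u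
    proof (rule ccontr)
      assume "u \<notin> V.span {w}"
      hence "2 \<le> V.dim (range (br x))"
        using vs_dim_ge2[OF vs W(1), of "range (br x)" w u] that W(2) by auto
      thus False using le1[of x] by simp
    qed
    have key: "br z (br x y) = 0" for x y z
    proof (cases "br x y = 0")
      case True then show ?thesis by (simp add: zero2)
    next
      case False
      let ?w = "br x y"
      have wx: "?w \<in> range (br x)" by simp
      have wy: "?w \<in> range (br y)" using anti[of x y] neg2[of y x] by (metis rangeI)
      have e: "br z ?w = - br x (br y z) - br y (br z x)"
        using jac[of x y z] by (simp add: algebra_simps eq_neg_iff_add_eq_0)
      have "br x (br y z) \<in> V.span {?w}" using inspan[OF wx _ False] by simp
      moreover have "br y (br z x) \<in> V.span {?w}" using inspan[OF wy _ False] by simp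
      ultimately have "br z ?w \<in> V.span {?w}"
        unfolding e by (intro V.span_diff V.span_neg) auto
      then obtain m where "br z ?w = scale m ?w" by (auto simp: V.span_singleton)
      thus ?thesis using nil False by blast
    qed
    show "derived_alg scale br \<subseteq> lie_center br"
      unfolding derived_alg_def
      by (rule V.span_minimal[OF _ center_sub]) (auto simp: lie_center_def key)
  qed
qed

end
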